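(* Let $G=(V,E)$ be a finite connected graph and $\mathbf{p}\in\mathbb{R}^V$ with $\sum_{v\in V}\mathbf{p}_v=0$. Let $\mathcal{G}=(\mathcal V,\mathcal E)$ be a connected component of the graph $\mathfrak G$, with $\mathcal V=\mathcal V_1\sqcup\mathcal V_2$, $\mathcal V_i=\mathcal V\cap\mathfrak V_i$, and suppose $\mathcal G$ contains no special vertex. Then $$\sum_{\mathfrak u\in\mathcal V_1}q(\mathfrak u)=\sum_{\mathfrak w\in\mathcal V_2}q(\mathfrak w).$$
   Context: Spanning trees and spanning 2-forests (acyclic spanning subgraphs with exactly two connected components) of $G$ form sets $\mathcal{ST}$, $\mathcal{SF}_2$; $F+e$ (resp. $T-e$) denotes the spanning subgraph obtained by adding (resp. removing) the edge $e$. For $F\in\mathcal{SF}_2$, $\mathcal{P}(F)=\{X,X'\}$ is the partition of $V$ into the vertex sets of its two components, $F\sim_v F'$ iff $\mathcal{P}(F)=\mathcal{P}(F')$, and $q(F)=(\sum_{v\in X}\mathbf{p}_v)^2$ (independent of the choice of part since $\mathbf{p}$ sums to zero). The graph $\mathfrak G$ is bipartite with vertex set $\mathfrak V_1\sqcup\mathfrak V_2$, $\mathfrak V_1=\{(F_1,F_2,T):F_1,F_2\in\mathcal{SF}_2,T\in\mathcal{ST}\}$, $\mathfrak V_2=\{(T_1,T_2,F):T_1,T_2\in\mathcal{ST},F\in\mathcal{SF}_2\}$; $(F_1,F_2,T)$ is adjacent to $(T_1,T_2,F)$ iff there is an edge $e$ with $T=F+e$, $F_1=T_1-e$, $F_2=T_2-e$.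 A vertex $(F_1,F_2,T)\in\mathfrak V_1$ is special if $F_1\not\sim_v F_2$; a vertex $(T_1,T_2,F)\in\mathfrak V_2$ is special if there is an edge $e\in(E(T_1)\setminus E(T_2))\cup(E(T_2)\setminus E(T_1))$ with $F+e$ a spanning tree. For non-special vertices, $q(F_1,F_2,T)=q(F_1)$ $(=q(F_2))$ and $q(T_1,T_2,F)=q(F)$. *)

theory Defs
  imports Complex_Main
begin

text \<open>Finite simple graphs: a vertex set V and an edge set E of 2-element subsets of V.
  Spanning subgraphs are identified with their edge sets F (a subset of E).\<close>

definition simple_graph :: "'v set \<Rightarrow> 'v set set \<Rightarrow> bool" where
  "simple_graph V E \<longleftrightarrow> finite V \<and> (\<forall>e\<in>E. e \<subseteq> V \<and> card e = 2)"

definition adj_rel :: "'v set set \<Rightarrow> ('v \<times> 'v) set" where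
  "adj_rel F = {(x, y). {x, y} \<in> F}"

definition comp :: "'v set \<Rightarrow> 'v set set \<Rightarrow> 'v \<Rightarrow> 'v set" where
  "comp V F v = {u \<in> V. (v, u) \<in> (adj_rel F)\<^sup>*}"

definition parts :: "'v set \<Rightarrow> 'v set set \<Rightarrow> 'v set set" where
  "parts V F = comp V F ` V"

definition has_cycle :: "'v set set \<Rightarrow> bool" where
  "has_cycle F \<longleftrightarrow> (\<exists>vs. distinct vs \<and> length vs \<ge> 3 \<and>
      (\<forall>i < length vs. {vs ! i, vs ! (Suc i mod length vs)} \<in> F))"

definition spanning_tree :: "'v set \<Rightarrow> 'v set set \<Rightarrow> 'v set set \<Rightarrow> bool" where
  "spanning_tree V E T \<longleftrightarrow> T \<subseteq> E \<and> \<not> has_cycle T \<and> card (parts V T) = 1"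

definition spanning_2forest :: "'v set \<Rightarrow> 'v set set \<Rightarrow> 'v set set \<Rightarrow> bool" where
  "spanning_2forest V E F \<longleftrightarrow> F \<subseteq> E \<and> \<not> has_cycle F \<and> card (parts V F) = 2"

definition connected_graph :: "'v set \<Rightarrow> 'v set set \<Rightarrow> bool" where
  "connected_graph V E \<longleftrightarrow> card (parts V E) = 1"

definition qF :: "'v set \<Rightarrow> ('v \<Rightarrow> real) \<Rightarrow> 'v set set \<Rightarrow> real" where
  "qF V p F = (\<Sum>v\<in>(SOME X. X \<in> parts V F). p v)\<^sup>2"

text \<open>Vertices of the big graph: Inl (F1,F2,T) in V_1, Inr (T1,T2,F) in V_2.\<close>
type_synonym 'v gvert = "('v set set \<times> 'v set set \<times> 'v set set) + ('v set set \<times> 'v set set \<times> 'v set set)"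

definition GV1 :: "'v set \<Rightarrow> 'v set set \<Rightarrow> ('v set set \<times> 'v set set \<times> 'v set set) set" where
  "GV1 V E = {(F1, F2, T). spanning_2forest V E F1 \<and> spanning_2forest V E F2 \<and> spanning_tree V E T}"

definition GV2 :: "'v set \<Rightarrow> 'v set set \<Rightarrow> ('v set set \<times> 'v set set \<times> 'v set set) set" where
  "GV2 V E = {(T1, T2, F). spanning_tree V E T1 \<and> spanning_tree V E T2 \<and> spanning_2forest V E F}"

definition GVerts :: "'v set \<Rightarrow> 'v set set \<Rightarrow> 'v gvert set" where
  "GVerts V E = Inl ` GV1 V E \<union> Inr ` GV2 V E"

definition gadj12 :: "'v set set \<Rightarrow> ('v set set \<times> 'v set set \<times> 'v set set)
    \<Rightarrow> ('v set set \<times> 'v set set \<times> 'v set set) \<Rightarrow> bool" where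
  "gadj12 E u w = (case u of (F1, F2, T) \<Rightarrow> case w of (T1, T2, F) \<Rightarrow>
      (\<exists>e\<in>E. T = insert e F \<and> F1 = T1 - {e} \<and> F2 = T2 - {e}))"

definition GEdges :: "'v set \<Rightarrow> 'v set set \<Rightarrow> ('v gvert \<times> 'v gvert) set" where
  "GEdges V E = {(Inl u, Inr w) | u w. u \<in> GV1 V E \<and> w \<in> GV2 V E \<and> gadj12 E u w}
             \<union> {(Inr w, Inl u) | u w. u \<in> GV1 V E \<and> w \<in> GV2 V E \<and> gadj12 E u w}"

definition Gcomp :: "'v set \<Rightarrow> 'v set set \<Rightarrow> 'v gvert \<Rightarrow> 'v gvert set" where
  "Gcomp V E x = {y \<in> GVerts V E. (x, y) \<in> (GEdges V E)\<^sup>*}"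

definition special :: "'v set \<Rightarrow> 'v set set \<Rightarrow> 'v gvert \<Rightarrow> bool" where
  "special V E x = (case x of
      Inl (F1, F2, T) \<Rightarrow> parts V F1 \<noteq> parts V F2
    | Inr (T1, T2, F) \<Rightarrow> (\<exists>e \<in> (T1 - T2) \<union> (T2 - T1). spanning_tree V E (insert e F)))"

definition qG :: "'v set \<Rightarrow> ('v \<Rightarrow> real) \<Rightarrow> 'v gvert \<Rightarrow> real" where
  "qG V p x = (case x of Inl (F1, F2, T) \<Rightarrow> qF V p F1 | Inr (T1, T2, F) \<Rightarrow> qF V p F)"

end

theory Submission
  imports Defs
begin

definition wfE :: "'v set \<Rightarrow> 'v set set \<Rightarrow> bool" where
  "wfE V F \<longleftrightarrow> (\<forall>e\<in>F. e \<subseteq> V \<and> card e = 2)"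

lemma adj_rel_iff[simp]: "(x,y) \<in> adj_rel F \<longleftrightarrow> {x,y} \<in> F"
  by (simp add: adj_rel_def)

lemma sym_adj: "sym (adj_rel F)"
  by (auto simp: sym_def insert_commute)

lemma rtr_sym: "(x,y) \<in> (adj_rel F)\<^sup>* \<Longrightarrow> (y,x) \<in> (adj_rel F)\<^sup>*"
proof -
  assume "(x,y) \<in> (adj_rel F)\<^sup>*"
  moreover have "sym ((adj_rel F)\<^sup>*)" using sym_adj by (rule sym_rtrancl)
  ultimately show ?thesis by (simp add: sym_def)
qed

lemma rtr_mono: "F \<subseteq> G \<Longrightarrow> (x,y) \<in> (adj_rel F)\<^sup>* \<Longrightarrow> (x,y) \<in> (adj_rel G)\<^sup>*"
proof -
  assume "F \<subseteq> G" "(x,y) \<in> (adj_rel F)\<^sup>*"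
  moreover have "adj_rel F \<subseteq> adj_rel G" using \<open>F \<subseteq> G\<close> by (auto simp: adj_rel_def)
  ultimately show ?thesis using rtrancl_mono by blast
qed

lemma wfE_mono: "wfE V G \<Longrightarrow> F \<subseteq> G \<Longrightarrow> wfE V F"
  by (auto simp: wfE_def)

lemma wfE_edge: "wfE V F \<Longrightarrow> {x,y} \<in> F \<Longrightarrow> x \<in> V \<and> y \<in> V \<and> x \<noteq> y"
proof -
  assume "wfE V F" "{x,y} \<in> F"
  then have "{x,y} \<subseteq> V" "card {x,y} = 2" unfolding wfE_def by auto
  then show ?thesis by (cases "x = y") auto
qed

lemma wfE_rtr: "(x,y) \<in> (adj_rel F)\<^sup>* \<Longrightarrow> wfE V F \<Longrightarrow> x \<in> V \<Longrightarrow> y \<in> V"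
  by (induction rule: rtrancl_induct) (auto dest: wfE_edge)

lemma comp_self: "v \<in> V \<Longrightarrow> v \<in> comp V F v"
  by (simp add: comp_def)

lemma comp_sub: "comp V F v \<subseteq> V"
  by (auto simp: comp_def)

lemma comp_mem: "u \<in> comp V F v \<longleftrightarrow> u \<in> V \<and> (v,u) \<in> (adj_rel F)\<^sup>*"
  by (simp add: comp_def)

lemma comp_eq_iff: "u \<in> V \<Longrightarrow> v \<in> V \<Longrightarrow> comp V F u = comp V F v \<longleftrightarrow> (u,v) \<in> (adj_rel F)\<^sup>*"
proof
  assume "comp V F u = comp V F v" "u \<in> V" "v \<in> V"
  then show "(u,v) \<in> (adj_rel F)\<^sup>*" by (metis comp_mem comp_self)
next
  assume h: "(u,v) \<in> (adj_rel F)\<^sup>*"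
  show "comp V F u = comp V F v"
    unfolding comp_def using h rtr_sym[OF h]
    by (auto intro: rtrancl_trans)
qed

lemma comp_eq_of_mem: "u \<in> comp V F v \<Longrightarrow> v \<in> V \<Longrightarrow> comp V F u = comp V F v"
  by (metis comp_eq_iff comp_mem rtr_sym)

lemma parts_mem: "X \<in> parts V F \<Longrightarrow> a \<in> X \<Longrightarrow> X = comp V F a"
proof -
  assume "X \<in> parts V F" "a \<in> X"
  then obtain x where "x \<in> V" "X = comp V F x" unfolding parts_def by auto
  then show ?thesis using \<open>a \<in> X\<close> comp_eq_of_mem[of a V F x] by simp
qed

lemma comp_in_parts: "v \<in> V \<Longrightarrow> comp V F v \<in> parts V F"
  by (simp add: parts_def)

lemma finite_parts: "finite V \<Longrightarrow> finite (parts V F)"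
  by (simp add: parts_def)

lemma has_cycle_mono: "has_cycle F \<Longrightarrow> F \<subseteq> G \<Longrightarrow> has_cycle G"
  unfolding has_cycle_def by blast

lemma rtr_path:
  "(a,b) \<in> r\<^sup>* \<Longrightarrow> \<exists>ps. ps \<noteq> [] \<and> hd ps = a \<and> last ps = b \<and> distinct ps \<and>
      (\<forall>i. Suc i < length ps \<longrightarrow> (ps!i, ps!Suc i) \<in> r)"
proof (induction rule: rtrancl_induct)
  case base
  show ?case by (intro exI[of _ "[a]"]) auto
next
  case (step y z)
  then obtain ps where ps: "ps \<noteq> []" "hd ps = a" "last ps = y" "distinct ps"
      "\<forall>i. Suc i < length ps \<longrightarrow> (ps!i, ps!Suc i) \<in> r" by blast
  show ?case
  proof (cases "z \<in> set ps")
    case True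
    then obtain k where k: "k < length ps" "ps!k = z" by (meson in_set_conv_nth)
    let ?qs = "take (Suc k) ps"
    have "?qs \<noteq> []" using ps by simp
    moreover have "hd ?qs = a" using ps k by (simp add: hd_conv_nth)
    moreover have "last ?qs = z"
    proof (cases "Suc k < length ps")
      case True then show ?thesis using ps k by (simp add: last_conv_nth min_def)
    next
      case False
      then have "k = length ps - 1" using k by simp
      then show ?thesis using ps k False by (simp add: last_conv_nth min_def)
    qed
    moreover have "distinct ?qs" using ps by simp
    moreover have "\<forall>i. Suc i < length ?qs \<longrightarrow> (?qs!i, ?qs!Suc i) \<in> r" using ps k by simp
    ultimately show ?thesis by blast
  next
    case False
    let ?qs = "ps @ [z]"
    have "hd ?qs = a" using ps by simp
    moreover have "distinct ?qs" using ps False by simp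
    moreover have "\<forall>i. Suc i < length ?qs \<longrightarrow> (?qs!i, ?qs!Suc i) \<in> r"
    proof (intro allI impI)
      fix i assume i: "Suc i < length ?qs"
      show "(?qs!i, ?qs!Suc i) \<in> r"
      proof (cases "Suc i < length ps")
        case True then show ?thesis using ps by (simp add: nth_append)
      next
        case False
        then have "Suc i = length ps" using i by simp
        then have "ps ! i = y" using ps by (metis diff_Suc_1 last_conv_nth)
        then show ?thesis using \<open>Suc i = length ps\<close> step(2) by (simp add: nth_append)
      qed
    qed
    ultimately show ?thesis by auto
  qed
qed

lemma cycle_of_path:
  assumes "(a,b) \<in> (adj_rel F)\<^sup>*" "a \<noteq> b" "{a,b} \<notin> F"
  shows "has_cycle (insert {a,b} F)"
proof -
  obtain ps where ps: "ps \<noteq> []" "hd ps = a" "last ps = b" "distinct ps"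
      "\<forall>i. Suc i < length ps \<longrightarrow> (ps!i, ps!Suc i) \<in> adj_rel F"
    using rtr_path[OF assms(1)] by blast
  define n where "n = length ps"
  have h0: "ps!0 = a" using ps by (simp add: hd_conv_nth)
  have hl: "ps!(n - 1) = b" using ps by (simp add: last_conv_nth n_def)
  have "n \<noteq> 0" using ps n_def by simp
  moreover have "n \<noteq> 1" using h0 hl assms(2) by auto
  moreover have "n \<noteq> 2"
  proof
    assume "n = 2"
    then have "(ps!0, ps!1) \<in> adj_rel F" using ps(5) n_def by auto
    then show False using h0 hl \<open>n = 2\<close> assms(3) by simp
  qed
  ultimately have n3: "n \<ge> 3" by linarith
  have "\<forall>i < n. {ps ! i, ps ! (Suc i mod n)} \<in> insert {a,b} F"
  proof (intro allI impI)
    fix i assume "i < n"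
    show "{ps ! i, ps ! (Suc i mod n)} \<in> insert {a,b} F"
    proof (cases "Suc i < n")
      case True then show ?thesis using ps(5) n_def by simp
    next
      case False
      then have "Suc i = n" using \<open>i < n\<close> by simp
      then have "i = n - 1" by simp
      then show ?thesis using h0 hl \<open>Suc i = n\<close> by (auto simp: insert_commute)
    qed
  qed
  then show ?thesis unfolding has_cycle_def using ps(4) n3 n_def by blast
qed

lemma arith1: "3 \<le> (n::nat) \<Longrightarrow> i < n \<Longrightarrow> Suc (Suc i mod n) mod n \<noteq> i"
proof -
  assume "3 \<le> n" "i < n"
  show ?thesis
  proof (cases "Suc i < n")
    case True
    then have "Suc i mod n = Suc i" by simp
    then show ?thesis using \<open>3 \<le> n\<close> \<open>i < n\<close>
      by (cases "Suc (Suc i) < n") (auto simp: mod_if)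
  next
    case False
    then have "Suc i = n" using \<open>i < n\<close> by simp
    then show ?thesis using \<open>3 \<le> n\<close> by (auto simp: mod_if)
  qed
qed

lemma arith2: "i < (n::nat) \<Longrightarrow> Suc k < n \<Longrightarrow> (Suc i + k) mod n \<noteq> i"
proof -
  assume a: "i < n" "Suc k < n"
  show ?thesis
  proof (cases "Suc i + k < n")
    case True then show ?thesis by simp
  next
    case False
    then have "(Suc i + k) mod n = Suc i + k - n" using a by (simp add: mod_if le_mod_geq)
    then show ?thesis using a False by simp
  qed
qed

lemma no_cycle_insert:
  assumes nc: "\<not> has_cycle F" and nab: "(a,b) \<notin> (adj_rel F)\<^sup>*"
  shows "\<not> has_cycle (insert {a,b} F)"
proof
  assume "has_cycle (insert {a,b} F)"
  then obtain vs where vs: "distinct vs" "length vs \<ge> 3"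
      "\<forall>i < length vs. {vs ! i, vs ! (Suc i mod length vs)} \<in> insert {a,b} F"
    unfolding has_cycle_def by blast
  define n where "n = length vs"
  have n3: "n \<ge> 3" using vs n_def by simp
  have edges: "\<And>i. i < n \<Longrightarrow> {vs ! i, vs ! (Suc i mod n)} \<in> insert {a,b} F"
    using vs n_def by simp
  obtain i where i: "i < n" "{vs ! i, vs ! (Suc i mod n)} \<notin> F"
    using nc vs n_def unfolding has_cycle_def by blast
  have ei: "{vs ! i, vs ! (Suc i mod n)} = {a,b}" using edges[OF i(1)] i(2) by simp
  have others: "\<And>j. j < n \<Longrightarrow> j \<noteq> i \<Longrightarrow> {vs ! j, vs ! (Suc j mod n)} \<in> F"
  proof (rule ccontr)
    fix j assume j: "j < n" "j \<noteq> i" "{vs ! j, vs ! (Suc j mod n)} \<notin> F"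
    then have "{vs ! j, vs ! (Suc j mod n)} = {vs ! i, vs ! (Suc i mod n)}"
      using edges[OF j(1)] ei by simp
    moreover have "Suc j mod n < n" "Suc i mod n < n" using n3 by auto
    ultimately have "(j = i) \<or> (j = Suc i mod n \<and> Suc j mod n = i)"
      using vs(1) j(1) i(1) n_def by (auto simp: doubleton_eq_iff nth_eq_iff_index_eq)
    then show False using j(2) arith1[OF n3 i(1)] by auto
  qed
  have walk: "\<And>k. k < n \<Longrightarrow> (vs ! (Suc i mod n), vs ! ((Suc i + k) mod n)) \<in> (adj_rel F)\<^sup>*"
  proof -
    fix k show "k < n \<Longrightarrow> (vs ! (Suc i mod n), vs ! ((Suc i + k) mod n)) \<in> (adj_rel F)\<^sup>*"
    proof (induction k)
      case 0 then show ?case by simp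
    next
      case (Suc k)
      define j where "j = (Suc i + k) mod n"
      have "j < n" using n3 j_def by simp
      moreover have "j \<noteq> i" using arith2[OF i(1) Suc.prems] j_def by simp
      ultimately have "{vs ! j, vs ! (Suc j mod n)} \<in> F" by (rule others)
      moreover have "Suc j mod n = (Suc i + Suc k) mod n" using j_def by (simp add: mod_Suc_eq)
      ultimately have "(vs ! ((Suc i + k) mod n), vs ! ((Suc i + Suc k) mod n)) \<in> adj_rel F"
        using j_def by simp
      then show ?case using Suc by (meson Suc_lessD rtrancl.rtrancl_into_rtrancl)
    qed
  qed
  have "(Suc i + (n - 1)) mod n = i" using i(1) n3 by simp
  then have "(vs ! (Suc i mod n), vs ! i) \<in> (adj_rel F)\<^sup>*" using walk[of "n - 1"] n3 by simp
  then show False using ei nab rtr_sym[of "vs ! (Suc i mod n)" "vs ! i" F] by (auto simp: doubleton_eq_iff)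
qed

lemma rtr_insert_int:
  assumes "(a,b) \<in> (adj_rel F)\<^sup>*"
  shows "(adj_rel (insert {a,b} F))\<^sup>* = (adj_rel F)\<^sup>*"
proof
  have "adj_rel (insert {a,b} F) \<subseteq> (adj_rel F)\<^sup>*"
  proof
    fix p assume "p \<in> adj_rel (insert {a,b} F)"
    then obtain x y where p: "p = (x,y)" "{x,y} = {a,b} \<or> {x,y} \<in> F" by (cases p) auto
    then show "p \<in> (adj_rel F)\<^sup>*"
    proof (cases "{x,y} \<in> F")
      case True then show ?thesis using p by auto
    next
      case False
      then have "(x = a \<and> y = b) \<or> (x = b \<and> y = a)" using p by (auto simp: doubleton_eq_iff)
      then show ?thesis using p assms rtr_sym[OF assms] by auto
    qed
  qed
  then show "(adj_rel (insert {a,b} F))\<^sup>* \<subseteq> (adj_rel F)\<^sup>*"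
    by (simp add: rtrancl_subset_rtrancl)
next
  show "(adj_rel F)\<^sup>* \<subseteq> (adj_rel (insert {a,b} F))\<^sup>*"
    using rtr_mono[of F "insert {a,b} F"] by auto
qed

lemma parts_insert_int:
  assumes "(a,b) \<in> (adj_rel F)\<^sup>*" shows "parts V (insert {a,b} F) = parts V F"
  unfolding parts_def comp_def by (simp add: rtr_insert_int[OF assms])

lemma rtr_insert_char:
  "(x,y) \<in> (adj_rel (insert {a,b} F))\<^sup>* \<longleftrightarrow>
    (x,y) \<in> (adj_rel F)\<^sup>* \<or> ((x,a) \<in> (adj_rel F)\<^sup>* \<and> (b,y) \<in> (adj_rel F)\<^sup>*)
     \<or> ((x,b) \<in> (adj_rel F)\<^sup>* \<and> (a,y) \<in> (adj_rel F)\<^sup>*)" (is "?L \<longleftrightarrow> ?R x y")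
proof
  assume ?L
  then show "?R x y"
  proof (induction rule: rtrancl_induct)
    case base then show ?case by simp
  next
    case (step y z)
    from step(2) have "{y,z} \<in> F \<or> {y,z} = {a,b}" by auto
    then show ?case
    proof
      assume "{y,z} \<in> F"
      then have "(y,z) \<in> adj_rel F" by simp
      then show ?case using step(3) by (meson rtrancl.rtrancl_into_rtrancl)
    next
      assume "{y,z} = {a,b}"
      then have "(y = a \<and> z = b) \<or> (y = b \<and> z = a)" by (auto simp: doubleton_eq_iff)
      then show ?case using step(3) rtrancl.rtrancl_refl by blast
    qed
  qed
next
  let ?R' = "adj_rel (insert {a,b} F)"
  have sub: "\<And>u v. (u,v) \<in> (adj_rel F)\<^sup>* \<Longrightarrow> (u,v) \<in> ?R'\<^sup>*"
    using rtr_mono[of F "insert {a,b} F"] by auto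
  have ab: "(a,b) \<in> ?R'\<^sup>*" "(b,a) \<in> ?R'\<^sup>*" by (auto simp: insert_commute)
  assume "?R x y"
  then show ?L
  proof (elim disjE conjE)
    assume "(x,y) \<in> (adj_rel F)\<^sup>*" then show ?L using sub by blast
  next
    assume "(x,a) \<in> (adj_rel F)\<^sup>*" "(b,y) \<in> (adj_rel F)\<^sup>*"
    then have "(x,a) \<in> ?R'\<^sup>*" "(b,y) \<in> ?R'\<^sup>*" using sub by blast+
    then show ?L using ab(1) rtrancl_trans by metis
  next
    assume "(x,b) \<in> (adj_rel F)\<^sup>*" "(a,y) \<in> (adj_rel F)\<^sup>*"
    then have "(x,b) \<in> ?R'\<^sup>*" "(a,y) \<in> ?R'\<^sup>*" using sub by blast+
    then show ?L using ab(2) rtrancl_trans by metis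
  qed
qed

lemma parts_empty: "parts V {} = (\<lambda>v. {v}) ` V"
proof -
  have e: "adj_rel {} = {}" by (simp add: adj_rel_def)
  have "(adj_rel {})\<^sup>* = Id" unfolding e by (rule rtrancl_empty)
  then show ?thesis unfolding parts_def comp_def by auto
qed

lemma card2_edge: "card e = 2 \<Longrightarrow> \<exists>a b. e = {a,b} \<and> a \<noteq> b"
  by (meson card_2_iff)

lemma card_parts_insert_cross:
  assumes fin: "finite V" and ab: "a \<in> V" "b \<in> V" and nab: "(a,b) \<notin> (adj_rel F)\<^sup>*"
  shows "card (parts V F) = Suc (card (parts V (insert {a,b} F)))"
proof -
  let ?R = "(adj_rel F)\<^sup>*"
  define A where "A = comp V F a"
  define B where "B = comp V F b"
  have AB: "A \<in> parts V F" "B \<in> parts V F" using ab by (auto simp: A_def B_def comp_in_parts)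
  have AneB: "A \<noteq> B" using comp_eq_iff[OF ab] nab unfolding A_def B_def by blast
  have c': "comp V (insert {a,b} F) v = (if v \<in> A \<union> B then A \<union> B else comp V F v)"
    if v: "v \<in> V" for v
  proof (cases "v \<in> A \<union> B")
    case True
    then have "(a,v) \<in> ?R \<or> (b,v) \<in> ?R" unfolding A_def B_def by (auto simp: comp_mem)
    then have "(v,a) \<in> ?R \<or> (v,b) \<in> ?R" using rtr_sym[of a v F] rtr_sym[of b v F] by blast
    note disj = this
    have key: "(v,u) \<in> (adj_rel (insert {a,b} F))\<^sup>* \<longleftrightarrow> (a,u) \<in> ?R \<or> (b,u) \<in> ?R" for u
      using disj
    proof
      assume va: "(v,a) \<in> ?R"
      have av: "(a,v) \<in> ?R" using rtr_sym[OF va] .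
      have vb: "(v,b) \<notin> ?R"
      proof
        assume "(v,b) \<in> ?R"
        then have "(a,b) \<in> ?R" by (rule rtrancl_trans[OF av])
        then show False using nab by simp
      qed
      have e1: "(v,u) \<in> ?R \<longleftrightarrow> (a,u) \<in> ?R"
      proof
        assume "(v,u) \<in> ?R" then show "(a,u) \<in> ?R" by (rule rtrancl_trans[OF av])
      next
        assume "(a,u) \<in> ?R" then show "(v,u) \<in> ?R" by (rule rtrancl_trans[OF va])
      qed
      show ?thesis unfolding rtr_insert_char using va vb e1 by simp
    next
      assume vb: "(v,b) \<in> ?R"
      have bv: "(b,v) \<in> ?R" using rtr_sym[OF vb] .
      have va: "(v,a) \<notin> ?R"
      proof
        assume "(v,a) \<in> ?R"
        then have "(b,a) \<in> ?R" by (rule rtrancl_trans[OF bv])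
        then show False using nab rtr_sym[of b a F] by blast
      qed
      have e1: "(v,u) \<in> ?R \<longleftrightarrow> (b,u) \<in> ?R"
      proof
        assume "(v,u) \<in> ?R" then show "(b,u) \<in> ?R" by (rule rtrancl_trans[OF bv])
      next
        assume "(b,u) \<in> ?R" then show "(v,u) \<in> ?R" by (rule rtrancl_trans[OF vb])
      qed
      show ?thesis unfolding rtr_insert_char using va vb e1 by auto
    qed
    have "comp V (insert {a,b} F) v = A \<union> B" unfolding A_def B_def comp_def using key by auto
    then show ?thesis using True by simp
  next
    case False
    then have "(a,v) \<notin> ?R" "(b,v) \<notin> ?R" unfolding A_def B_def using v by (auto simp: comp_mem)
    then have "(v,a) \<notin> ?R" "(v,b) \<notin> ?R" using rtr_sym[of v a F] rtr_sym[of v b F] by blast+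
    then have "comp V (insert {a,b} F) v = comp V F v" unfolding comp_def rtr_insert_char by simp
    then show ?thesis using False by simp
  qed
  have P': "parts V (insert {a,b} F) = insert (A \<union> B) (parts V F - {A, B})"
  proof (rule set_eqI)
    fix X
    show "X \<in> parts V (insert {a,b} F) \<longleftrightarrow> X \<in> insert (A \<union> B) (parts V F - {A, B})"
    proof
      assume "X \<in> parts V (insert {a,b} F)"
      then obtain v where v: "v \<in> V" "X = comp V (insert {a,b} F) v" unfolding parts_def by blast
      have cv: "v \<in> comp V F v" using comp_self[OF v(1)] .
      show "X \<in> insert (A \<union> B) (parts V F - {A, B})"
      proof (cases "v \<in> A \<union> B")
        case True
        then have "X = A \<union> B" using c'[OF v(1)] v(2) by simp
        then show ?thesis by simp
      next
        case False
        then have X: "X = comp V F v" using c'[OF v(1)] v(2) by simp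
        have "comp V F v \<noteq> A" using cv False by blast
        moreover have "comp V F v \<noteq> B" using cv False by blast
        moreover have "comp V F v \<in> parts V F" using comp_in_parts[OF v(1)] .
        ultimately show ?thesis using X by blast
      qed
    next
      assume X: "X \<in> insert (A \<union> B) (parts V F - {A, B})"
      show "X \<in> parts V (insert {a,b} F)"
      proof (cases "X = A \<union> B")
        case True
        have "a \<in> A" using comp_self[OF ab(1)] A_def by simp
        then have "comp V (insert {a,b} F) a = A \<union> B" using c'[OF ab(1)] by simp
        then show ?thesis using True comp_in_parts[OF ab(1), of "insert {a,b} F"] by simp
      next
        case False
        then have X2: "X \<in> parts V F" "X \<noteq> A" "X \<noteq> B" using X by auto
        then obtain v where v: "v \<in> V" "X = comp V F v" unfolding parts_def by blast
        have vX: "v \<in> X" using v comp_self by fast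
        have "v \<notin> A"
        proof
          assume "v \<in> A"
          then have "A = comp V F v" using parts_mem[OF AB(1)] by blast
          then show False using X2(2) v(2) by simp
        qed
        moreover have "v \<notin> B"
        proof
          assume "v \<in> B"
          then have "B = comp V F v" using parts_mem[OF AB(2)] by blast
          then show False using X2(3) v(2) by simp
        qed
        ultimately have "comp V (insert {a,b} F) v = X" using c'[OF v(1)] v(2) by simp
        then show ?thesis using comp_in_parts[OF v(1), of "insert {a,b} F"] by simp
      qed
    qed
  qed
  have notin: "A \<union> B \<notin> parts V F - {A, B}"
  proof
    assume "A \<union> B \<in> parts V F - {A, B}"
    then have h: "A \<union> B \<in> parts V F" "A \<union> B \<noteq> A" by auto
    have "a \<in> A \<union> B" using ab comp_self A_def by fast
    then have "A \<union> B = A" using parts_mem[OF h(1)] A_def by simp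
    then show False using h by simp
  qed
  have fp: "finite (parts V F)" using fin finite_parts by blast
  have "card (parts V (insert {a,b} F)) = Suc (card (parts V F - {A, B}))"
    using P' notin fp by simp
  moreover have "card (parts V F - {A, B}) = card (parts V F) - 2"
    using AB AneB fp by (simp add: card_Diff_subset)
  moreover have "card (parts V F) \<ge> 2"
  proof -
    have "{A, B} \<subseteq> parts V F" using AB by simp
    then have "card {A,B} \<le> card (parts V F)" using fp card_mono by blast
    then show ?thesis using AneB by simp
  qed
  ultimately show ?thesis by simp
qed
lemma count_forest:
  assumes fin: "finite V"
  shows "F \<subseteq> Pow V \<Longrightarrow> wfE V F \<Longrightarrow> \<not> has_cycle F \<Longrightarrow> card (parts V F) + card F = card V"
proof -
  assume FP: "F \<subseteq> Pow V"
  have "finite (Pow V)" using fin by simp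
  then have "finite F" using FP by (rule finite_subset[rotated])
  then show "F \<subseteq> Pow V \<Longrightarrow> wfE V F \<Longrightarrow> \<not> has_cycle F \<Longrightarrow> card (parts V F) + card F = card V"
  proof (induction F rule: finite_induct)
    case empty
    have "card ((\<lambda>v. {v}) ` V) = card V" by (rule card_image) (auto simp: inj_on_def)
    then show ?case by (simp add: parts_empty)
  next
    case (insert e F)
    have wf: "wfE V F" using insert.prems(2) by (rule wfE_mono) auto
    have nc: "\<not> has_cycle F" using insert.prems(3) has_cycle_mono[of F "insert e F"] by auto
    have FP': "F \<subseteq> Pow V" using insert.prems(1) by simp
    have IH: "card (parts V F) + card F = card V" using insert.IH[OF FP' wf nc] .
    have ce: "card e = 2" "e \<subseteq> V" using insert.prems(2) unfolding wfE_def by auto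
    obtain a b where e: "e = {a,b}" "a \<noteq> b" using card2_edge[OF ce(1)] by blast
    have ab: "a \<in> V" "b \<in> V" using ce(2) e by auto
    have "(a,b) \<notin> (adj_rel F)\<^sup>*"
    proof
      assume "(a,b) \<in> (adj_rel F)\<^sup>*"
      then have "has_cycle (insert {a,b} F)" using cycle_of_path e insert.hyps(2) by simp
      then show False using insert.prems(3) e by simp
    qed
    then have "card (parts V F) = Suc (card (parts V (insert e F)))"
      using card_parts_insert_cross[OF fin ab] e by simp
    then show ?case using IH insert.hyps by simp
  qed
qed

definition cross :: "'v set set \<Rightarrow> 'v set \<Rightarrow> bool" where
  "cross F e \<longleftrightarrow> (\<exists>a b. e = {a,b} \<and> (a,b) \<notin> (adj_rel F)\<^sup>*)"

lemma cross_iff: "cross F {a,b} \<longleftrightarrow> (a,b) \<notin> (adj_rel F)\<^sup>*"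
proof
  assume "cross F {a,b}"
  then obtain x y where xy: "{a,b} = {x,y}" "(x,y) \<notin> (adj_rel F)\<^sup>*" unfolding cross_def by blast
  from xy(1) have "(a = x \<and> b = y) \<or> (a = y \<and> b = x)" by (auto simp: doubleton_eq_iff)
  then show "(a,b) \<notin> (adj_rel F)\<^sup>*"
  proof
    assume "a = x \<and> b = y" then show ?thesis using xy(2) by simp
  next
    assume h: "a = y \<and> b = x"
    show ?thesis
    proof
      assume "(a,b) \<in> (adj_rel F)\<^sup>*"
      then have "(b,a) \<in> (adj_rel F)\<^sup>*" by (rule rtr_sym)
      then show False using h xy(2) by simp
    qed
  qed
next
  assume "(a,b) \<notin> (adj_rel F)\<^sup>*"
  then show "cross F {a,b}" unfolding cross_def by blast
qed

lemma sg_fin: "simple_graph V E \<Longrightarrow> finite V"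
  by (simp add: simple_graph_def)

lemma sg_wf: "simple_graph V E \<Longrightarrow> F \<subseteq> E \<Longrightarrow> wfE V F"
  by (auto simp: simple_graph_def wfE_def)

lemma sg_pow: "simple_graph V E \<Longrightarrow> F \<subseteq> E \<Longrightarrow> F \<subseteq> Pow V"
  by (auto simp: simple_graph_def)

lemma sg_finE: "simple_graph V E \<Longrightarrow> finite E"
proof -
  assume sg: "simple_graph V E"
  then have "E \<subseteq> Pow V" using sg_pow[OF sg] by simp
  moreover have "finite (Pow V)" using sg_fin[OF sg] by simp
  ultimately show ?thesis by (rule finite_subset)
qed

lemma count_sub:
  assumes sg: "simple_graph V E" and "F \<subseteq> E" "\<not> has_cycle F"
  shows "card (parts V F) + card F = card V"
  using count_forest[OF sg_fin[OF sg] sg_pow[OF sg assms(2)] sg_wf[OF sg assms(2)] assms(3)] .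

lemma tree_count: "simple_graph V E \<Longrightarrow> spanning_tree V E T \<Longrightarrow> card T + 1 = card V"
proof -
  assume sg: "simple_graph V E" and T: "spanning_tree V E T"
  then have "T \<subseteq> E" "\<not> has_cycle T" "card (parts V T) = 1" unfolding spanning_tree_def by auto
  then show ?thesis using count_sub[OF sg, of T] by simp
qed

lemma forest_count: "simple_graph V E \<Longrightarrow> spanning_2forest V E F \<Longrightarrow> card F + 2 = card V"
proof -
  assume sg: "simple_graph V E" and T: "spanning_2forest V E F"
  then have "F \<subseteq> E" "\<not> has_cycle F" "card (parts V F) = 2" unfolding spanning_2forest_def by auto
  then show ?thesis using count_sub[OF sg, of F] by simp
qed

lemma finite_sub: "simple_graph V E \<Longrightarrow> F \<subseteq> E \<Longrightarrow> finite F"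
  using sg_finE[of V E] finite_subset[of F E] by simp

lemma tree_minus:
  assumes sg: "simple_graph V E" and T: "spanning_tree V E T" and ab: "{a,b} \<in> T"
  shows "spanning_2forest V E (T - {{a,b}}) \<and> (a,b) \<notin> (adj_rel (T - {{a,b}}))\<^sup>*"
proof -
  let ?F = "T - {{a,b}}"
  have TE: "T \<subseteq> E" and ncT: "\<not> has_cycle T" and pT: "card (parts V T) = 1"
    using T unfolding spanning_tree_def by auto
  have FE: "?F \<subseteq> E" using TE by blast
  have nc: "\<not> has_cycle ?F" using ncT has_cycle_mono[of ?F T] by blast
  have finT: "finite T" using finite_sub[OF sg TE] .
  have cF: "card ?F = card T - 1" using ab finT by simp
  have cT: "card T + 1 = card V" using tree_count[OF sg T] .
  have "T \<noteq> {}" using ab by auto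
  then have cT1: "card T \<ge> 1" using finT by (simp add: Suc_le_eq card_gt_0_iff)
  have "card (parts V ?F) + card ?F = card V" using count_sub[OF sg FE nc] .
  then have p2: "card (parts V ?F) = 2" using cF cT cT1 by simp
  have "(a,b) \<notin> (adj_rel ?F)\<^sup>*"
  proof
    assume "(a,b) \<in> (adj_rel ?F)\<^sup>*"
    then have "parts V (insert {a,b} ?F) = parts V ?F" by (rule parts_insert_int)
    moreover have "insert {a,b} ?F = T" using ab by blast
    ultimately show False using p2 pT by simp
  qed
  moreover have "spanning_2forest V E ?F" unfolding spanning_2forest_def using FE nc p2 by simp
  ultimately show ?thesis by simp
qed

lemma forest_plus:
  assumes sg: "simple_graph V E" and F: "spanning_2forest V E F" and abE: "{a,b} \<in> E"
    and nab: "(a,b) \<notin> (adj_rel F)\<^sup>*"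
  shows "spanning_tree V E (insert {a,b} F) \<and> {a,b} \<notin> F"
proof -
  have FE: "F \<subseteq> E" and nc: "\<not> has_cycle F" and p2: "card (parts V F) = 2"
    using F unfolding spanning_2forest_def by auto
  have ab: "a \<in> V" "b \<in> V" using wfE_edge[OF sg_wf[OF sg subset_refl] abE] by auto
  have "card (parts V F) = Suc (card (parts V (insert {a,b} F)))"
    using card_parts_insert_cross[OF sg_fin[OF sg] ab nab] .
  then have p1: "card (parts V (insert {a,b} F)) = 1" using p2 by simp
  have "\<not> has_cycle (insert {a,b} F)" using no_cycle_insert[OF nc nab] .
  moreover have "insert {a,b} F \<subseteq> E" using FE abE by simp
  moreover have "{a,b} \<notin> F"
  proof
    assume "{a,b} \<in> F"
    then have "(a,b) \<in> adj_rel F" by simp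
    then show False using nab by (simp add: r_into_rtrancl)
  qed
  ultimately show ?thesis using p1 unfolding spanning_tree_def by simp
qed

lemma forest_plus_conv:
  assumes F: "spanning_2forest V E F" and T: "spanning_tree V E (insert {a,b} F)"
  shows "(a,b) \<notin> (adj_rel F)\<^sup>*"
proof
  assume "(a,b) \<in> (adj_rel F)\<^sup>*"
  then have "parts V (insert {a,b} F) = parts V F" by (rule parts_insert_int)
  then show False using F T unfolding spanning_2forest_def spanning_tree_def by simp
qed

lemma two_parts:
  assumes fin: "finite V" and p2: "card (parts V F) = 2" and ab: "a \<in> V" "b \<in> V"
    and nab: "(a,b) \<notin> (adj_rel F)\<^sup>*"
  shows "parts V F = {comp V F a, comp V F b}" "comp V F a = V - comp V F b"
proof -
  have ne: "comp V F a \<noteq> comp V F b" using comp_eq_iff[OF ab, of F] nab by simp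
  have sub: "{comp V F a, comp V F b} \<subseteq> parts V F"
    using comp_in_parts[OF ab(1), of F] comp_in_parts[OF ab(2), of F] by simp
  have "card {comp V F a, comp V F b} = card (parts V F)" using ne p2 by simp
  then show P: "parts V F = {comp V F a, comp V F b}"
    using card_subset_eq[OF finite_parts[OF fin] sub] by simp
  show "comp V F a = V - comp V F b"
  proof (rule set_eqI)
    fix v
    show "v \<in> comp V F a \<longleftrightarrow> v \<in> V - comp V F b"
    proof
      assume va: "v \<in> comp V F a"
      have "v \<in> V" using va by (simp add: comp_mem)
      moreover have "v \<notin> comp V F b"
      proof
        assume "v \<in> comp V F b"
        then have "comp V F v = comp V F b" using comp_eq_of_mem[of v V F b] ab(2) by simp
        moreover have "comp V F v = comp V F a" using comp_eq_of_mem[OF va ab(1)] .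
        ultimately show False using ne by simp
      qed
      ultimately show "v \<in> V - comp V F b" by simp
    next
      assume v: "v \<in> V - comp V F b"
      then have vV: "v \<in> V" "v \<notin> comp V F b" by auto
      then have "comp V F v \<in> parts V F" using comp_in_parts[of v V F] by simp
      then have "comp V F v = comp V F a \<or> comp V F v = comp V F b" using P by simp
      moreover have "v \<in> comp V F v" using comp_self[OF vV(1)] .
      ultimately show "v \<in> comp V F a" using vV(2) by auto
    qed
  qed
qed

definition oth :: "'v \<Rightarrow> 'v set \<Rightarrow> 'v" where
  "oth a e = (SOME b. e = {a,b} \<and> a \<noteq> b)"

lemma oth_prop: "card e = 2 \<Longrightarrow> a \<in> e \<Longrightarrow> e = {a, oth a e} \<and> a \<noteq> oth a e"
proof -
  assume c: "card e = 2" and a: "a \<in> e"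
  obtain x y where xy: "e = {x,y}" "x \<noteq> y" using card2_edge[OF c] by blast
  have "\<exists>b. e = {a,b} \<and> a \<noteq> b"
  proof (cases "a = x")
    case True then show ?thesis using xy by blast
  next
    case False then have "a = y" using a xy by simp
    then show ?thesis using xy by (intro exI[of _ x]) auto
  qed
  then show ?thesis unfolding oth_def by (rule someI_ex)
qed

lemma edge_card: "simple_graph V E \<Longrightarrow> spanning_tree V E T \<Longrightarrow> e \<in> T \<Longrightarrow> card e = 2"
  unfolding simple_graph_def spanning_tree_def by blast

lemma edge_oth:
  assumes sg: "simple_graph V E" and T: "spanning_tree V E T" and e: "e \<in> T" and a: "a \<in> e"
  shows "e = {a, oth a e}" "a \<noteq> oth a e" "oth a e \<in> V" "a \<in> V"
proof -
  have c: "card e = 2" using edge_card[OF sg T e] .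
  show *: "e = {a, oth a e}" "a \<noteq> oth a e" using oth_prop[OF c a] by auto
  have "T \<subseteq> E" using T unfolding spanning_tree_def by simp
  then have "wfE V T" using sg_wf[OF sg] by blast
  then show "oth a e \<in> V" "a \<in> V" using wfE_edge[of V T a "oth a e"] e * by auto
qed

lemma tree_minus':
  assumes sg: "simple_graph V E" and T: "spanning_tree V E T" and e: "e \<in> T" and a: "a \<in> e"
  shows "spanning_2forest V E (T - {e})" "(a, oth a e) \<notin> (adj_rel (T - {e}))\<^sup>*"
proof -
  have ee: "e = {a, oth a e}" using edge_oth[OF assms] by simp
  have "{a, oth a e} \<in> T" using e ee by simp
  from tree_minus[OF sg T this] ee
  show "spanning_2forest V E (T - {e})" "(a, oth a e) \<notin> (adj_rel (T - {e}))\<^sup>*" by auto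
qed

lemma card_parts_sub:
  assumes sg: "simple_graph V E" and T: "spanning_tree V E T" and S: "S \<subseteq> T"
  shows "card (parts V (T - S)) = card S + 1"
proof -
  have TE: "T \<subseteq> E" and ncT: "\<not> has_cycle T" using T unfolding spanning_tree_def by auto
  have FE: "T - S \<subseteq> E" using TE by blast
  have nc: "\<not> has_cycle (T - S)" using ncT has_cycle_mono[of "T - S" T] by blast
  have finT: "finite T" using finite_sub[OF sg TE] .
  have cF: "card (T - S) = card T - card S" using card_Diff_subset[OF finite_subset[OF S finT] S] .
  have cS: "card S \<le> card T" using card_mono[OF finT S] .
  have "card (parts V (T - S)) + card (T - S) = card V" using count_sub[OF sg FE nc] .
  then show ?thesis using tree_count[OF sg T] cF cS by simp
qed

lemma disj_part:
  assumes sg: "simple_graph V E" and T: "spanning_tree V E T"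
    and e: "e \<in> T" "a \<in> e" and f: "f \<in> T" "a \<in> f" and ef: "e \<noteq> f"
  shows "comp V (T - {e}) (oth a e) \<inter> comp V (T - {f}) (oth a f) = {}"
proof -
  define be where "be = oth a e"
  define bf where "bf = oth a f"
  have eab: "e = {a,be}" "be \<in> V" "a \<in> V" using edge_oth[OF sg T e] be_def by auto
  have fab: "f = {a,bf}" "bf \<in> V" using edge_oth[OF sg T f] bf_def by auto
  let ?Re = "(adj_rel (T - {e}))\<^sup>*"
  let ?Rf = "(adj_rel (T - {f}))\<^sup>*"
  let ?T' = "T - {e,f}"
  let ?R' = "(adj_rel ?T')\<^sup>*"
  have na_e: "(a,be) \<notin> ?Re" using tree_minus'(2)[OF sg T e] be_def by simp
  have na_f: "(a,bf) \<notin> ?Rf" using tree_minus'(2)[OF sg T f] bf_def by simp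
  have bf_e: "(a,bf) \<in> ?Re"
  proof -
    have "f \<in> T - {e}" using f ef by simp
    then have "(a,bf) \<in> adj_rel (T - {e})" using fab by simp
    then show ?thesis by (rule r_into_rtrancl)
  qed
  have be_f: "(a,be) \<in> ?Rf"
  proof -
    have "e \<in> T - {f}" using e ef by simp
    then have "(a,be) \<in> adj_rel (T - {f})" using eab by simp
    then show ?thesis by (rule r_into_rtrancl)
  qed
  have me: "\<And>x y. (x,y) \<in> ?R' \<Longrightarrow> (x,y) \<in> ?Re" by (rule rtr_mono) auto
  have mf: "\<And>x y. (x,y) \<in> ?R' \<Longrightarrow> (x,y) \<in> ?Rf" by (rule rtr_mono) auto
  have n1: "(a,be) \<notin> ?R'" using me[of a be] na_e by blast
  have n2: "(a,bf) \<notin> ?R'" using mf[of a bf] na_f by blast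
  have n3: "(be,bf) \<notin> ?R'"
  proof
    assume "(be,bf) \<in> ?R'"
    then have "(be,bf) \<in> ?Re" by (rule me)
    moreover have "(bf,a) \<in> ?Re" using rtr_sym[OF bf_e] .
    ultimately have "(be,a) \<in> ?Re" by (rule rtrancl_trans)
    then show False using na_e rtr_sym[of be a] by blast
  qed
  have ef2: "{e,f} \<subseteq> T" using e f by simp
  have cp: "card (parts V ?T') = 3" using card_parts_sub[OF sg T ef2] ef by simp
  define A where "A = comp V ?T' a"
  define B where "B = comp V ?T' be"
  define C where "C = comp V ?T' bf"
  have AB: "A \<noteq> B" using comp_eq_iff[OF eab(3) eab(2), of ?T'] n1 A_def B_def by simp
  have AC: "A \<noteq> C" using comp_eq_iff[OF eab(3) fab(2), of ?T'] n2 A_def C_def by simp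
  have BC: "B \<noteq> C" using comp_eq_iff[OF eab(2) fab(2), of ?T'] n3 B_def C_def by simp
  have sub: "{A,B,C} \<subseteq> parts V ?T'"
    using comp_in_parts[OF eab(3), of ?T'] comp_in_parts[OF eab(2), of ?T']
      comp_in_parts[OF fab(2), of ?T'] A_def B_def C_def by simp
  have "card {A,B,C} = 3" using AB AC BC by simp
  then have PQ: "parts V ?T' = {A,B,C}"
    using card_subset_eq[OF finite_parts[OF sg_fin[OF sg]] sub] cp by simp
  show ?thesis
  proof (rule ccontr)
    assume "comp V (T - {e}) (oth a e) \<inter> comp V (T - {f}) (oth a f) \<noteq> {}"
    then obtain v where v: "v \<in> comp V (T - {e}) be" "v \<in> comp V (T - {f}) bf"
      using be_def bf_def by blast
    have vV: "v \<in> V" and v1: "(be,v) \<in> ?Re" and v2: "(bf,v) \<in> ?Rf"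
      using v by (auto simp: comp_mem)
    have "comp V ?T' v \<in> {A,B,C}" using comp_in_parts[OF vV, of ?T'] PQ by simp
    then have "comp V ?T' v = A \<or> comp V ?T' v = B \<or> comp V ?T' v = C" by simp
    then show False
    proof (elim disjE)
      assume "comp V ?T' v = A"
      then have "(v,a) \<in> ?R'" using comp_eq_iff[OF vV eab(3)] A_def by simp
      then have "(v,a) \<in> ?Re" by (rule me)
      with v1 have "(be,a) \<in> ?Re" by (rule rtrancl_trans)
      then show False using na_e rtr_sym[of be a] by blast
    next
      assume "comp V ?T' v = B"
      then have "(v,be) \<in> ?R'" using comp_eq_iff[OF vV eab(2)] B_def by simp
      then have "(v,be) \<in> ?Rf" by (rule mf)
      moreover have "(be,a) \<in> ?Rf" using rtr_sym[OF be_f] .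
      ultimately have "(v,a) \<in> ?Rf" by (rule rtrancl_trans)
      with v2 have "(bf,a) \<in> ?Rf" by (rule rtrancl_trans)
      then show False using na_f rtr_sym[of bf a] by blast
    next
      assume "comp V ?T' v = C"
      then have "(v,bf) \<in> ?R'" using comp_eq_iff[OF vV fab(2)] C_def by simp
      then have "(v,bf) \<in> ?Re" by (rule me)
      moreover have "(bf,a) \<in> ?Re" using rtr_sym[OF bf_e] .
      ultimately have "(v,a) \<in> ?Re" by (rule rtrancl_trans)
      with v1 have "(be,a) \<in> ?Re" by (rule rtrancl_trans)
      then show False using na_e rtr_sym[of be a] by blast
    qed
  qed
qed

lemma union_part:
  assumes sg: "simple_graph V E" and T: "spanning_tree V E T" and aV: "a \<in> V"
  shows "(\<Union>e\<in>{e\<in>T. a \<in> e}. comp V (T - {e}) (oth a e)) = V - {a}"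
proof (rule set_eqI)
  fix v
  define S where "S = {e\<in>T. a \<in> e}"
  have TE: "T \<subseteq> E" using T unfolding spanning_tree_def by simp
  have finT: "finite T" using finite_sub[OF sg TE] .
  have SS: "S \<subseteq> T" unfolding S_def by blast
  have finS: "finite S" using finite_subset[OF SS finT] .
  have eS1: "\<And>e. e \<in> S \<Longrightarrow> e \<in> T" unfolding S_def by simp
  have eS2: "\<And>e. e \<in> S \<Longrightarrow> a \<in> e" unfolding S_def by simp
  have othV: "\<And>e. e \<in> S \<Longrightarrow> oth a e \<in> V" using edge_oth(3)[OF sg T eS1 eS2] .
  have tm: "\<And>e. e \<in> S \<Longrightarrow> (a, oth a e) \<notin> (adj_rel (T - {e}))\<^sup>*" using tree_minus'(2)[OF sg T eS1 eS2] .
  show "v \<in> (\<Union>e\<in>{e\<in>T. a \<in> e}. comp V (T - {e}) (oth a e)) \<longleftrightarrow> v \<in> V - {a}"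
  proof
    assume "v \<in> (\<Union>e\<in>{e\<in>T. a \<in> e}. comp V (T - {e}) (oth a e))"
    then obtain e where e: "e \<in> T" "a \<in> e" and v: "v \<in> comp V (T - {e}) (oth a e)" by blast
    have vV: "v \<in> V" and r: "(oth a e, v) \<in> (adj_rel (T - {e}))\<^sup>*" using v by (auto simp: comp_mem)
    have "v \<noteq> a"
    proof
      assume "v = a"
      then have "(a, oth a e) \<in> (adj_rel (T - {e}))\<^sup>*" using rtr_sym[OF r] by simp
      then show False using tree_minus'(2)[OF sg T e] by simp
    qed
    then show "v \<in> V - {a}" using vV by simp
  next
    assume v: "v \<in> V - {a}"
    let ?T'' = "T - S"
    let ?R = "(adj_rel ?T'')\<^sup>*"
    have cp: "card (parts V ?T'') = card S + 1" using card_parts_sub[OF sg T SS] .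
    define Q where "Q = insert (comp V ?T'' a) ((\<lambda>e. comp V ?T'' (oth a e)) ` S)"
    have me: "\<And>e x y. e \<in> S \<Longrightarrow> (x,y) \<in> ?R \<Longrightarrow> (x,y) \<in> (adj_rel (T - {e}))\<^sup>*"
    proof -
      fix e x y assume "e \<in> S" "(x,y) \<in> ?R"
      moreover have "?T'' \<subseteq> T - {e}" using \<open>e \<in> S\<close> by blast
      ultimately show "(x,y) \<in> (adj_rel (T - {e}))\<^sup>*" using rtr_mono[of ?T'' "T - {e}" x y] by simp
    qed
    have neA: "comp V ?T'' a \<notin> (\<lambda>e. comp V ?T'' (oth a e)) ` S"
    proof
      assume "comp V ?T'' a \<in> (\<lambda>e. comp V ?T'' (oth a e)) ` S"
      then obtain e where e: "e \<in> S" "comp V ?T'' a = comp V ?T'' (oth a e)" by blast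
      have "oth a e \<in> V" using othV[OF e(1)] .
      then have "(a, oth a e) \<in> ?R" using comp_eq_iff[OF aV, of "oth a e" ?T''] e(2) by simp
      then have "(a, oth a e) \<in> (adj_rel (T - {e}))\<^sup>*" using me[OF e(1)] by blast
      then show False using tm[OF e(1)] by simp
    qed
    have inj: "inj_on (\<lambda>e. comp V ?T'' (oth a e)) S"
    proof (rule inj_onI)
      fix e f assume e: "e \<in> S" and f: "f \<in> S" and eq: "comp V ?T'' (oth a e) = comp V ?T'' (oth a f)"
      show "e = f"
      proof (rule ccontr)
        assume ef: "e \<noteq> f"
        have eT: "e \<in> T" "a \<in> e" and fT: "f \<in> T" "a \<in> f" using eS1 eS2 e f by auto
        have bV: "oth a e \<in> V" "oth a f \<in> V" using othV e f by auto
        have "(oth a e, oth a f) \<in> ?R" using comp_eq_iff[OF bV, of ?T''] eq by simp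
        then have r1: "(oth a e, oth a f) \<in> (adj_rel (T - {e}))\<^sup>*" using me[OF e] by blast
        have "f \<in> T - {e}" using fT ef by simp
        moreover have "f = {a, oth a f}" using edge_oth[OF sg T fT] by simp
        ultimately have "(oth a f, a) \<in> adj_rel (T - {e})" by (simp add: insert_commute)
        then have "(oth a f, a) \<in> (adj_rel (T - {e}))\<^sup>*" by (rule r_into_rtrancl)
        with r1 have "(oth a e, a) \<in> (adj_rel (T - {e}))\<^sup>*" by (rule rtrancl_trans)
        then have "(a, oth a e) \<in> (adj_rel (T - {e}))\<^sup>*" by (rule rtr_sym)
        then show False using tree_minus'(2)[OF sg T eT] by simp
      qed
    qed
    have cQ: "card Q = card S + 1"
      unfolding Q_def using neA card_image[OF inj] finS by simp
    have subQ: "Q \<subseteq> parts V ?T''"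
    proof
      fix X assume "X \<in> Q"
      then have "X = comp V ?T'' a \<or> (\<exists>e\<in>S. X = comp V ?T'' (oth a e))" unfolding Q_def by blast
      then show "X \<in> parts V ?T''"
      proof
        assume "X = comp V ?T'' a" then show ?thesis using comp_in_parts[OF aV] by simp
      next
        assume "\<exists>e\<in>S. X = comp V ?T'' (oth a e)"
        then obtain e where e: "e \<in> S" "X = comp V ?T'' (oth a e)" by blast
        have "oth a e \<in> V" using othV[OF e(1)] .
        then show ?thesis using comp_in_parts e(2) by simp
      qed
    qed
    have PQ: "parts V ?T'' = Q"
      using card_subset_eq[OF finite_parts[OF sg_fin[OF sg]] subQ] cQ cp by simp
    have vV: "v \<in> V" "v \<noteq> a" using v by auto
    have "comp V ?T'' v \<in> Q" using comp_in_parts[OF vV(1), of ?T''] PQ by simp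
    then have "comp V ?T'' v = comp V ?T'' a \<or> (\<exists>e\<in>S. comp V ?T'' v = comp V ?T'' (oth a e))"
      unfolding Q_def by blast
    then show "v \<in> (\<Union>e\<in>{e\<in>T. a \<in> e}. comp V (T - {e}) (oth a e))"
    proof
      assume "comp V ?T'' v = comp V ?T'' a"
      then have "(a,v) \<in> ?R" using comp_eq_iff[OF aV vV(1), of ?T''] by simp
      then show ?thesis
      proof (rule converse_rtranclE)
        assume "a = v" then show ?thesis using vV by simp
      next
        fix y assume "(a,y) \<in> adj_rel ?T''"
        then have "{a,y} \<in> T" "{a,y} \<notin> S" by auto
        then show ?thesis unfolding S_def by simp
      qed
    next
      assume "\<exists>e\<in>S. comp V ?T'' v = comp V ?T'' (oth a e)"
      then obtain e where e: "e \<in> S" "comp V ?T'' v = comp V ?T'' (oth a e)" by blast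
      have bV: "oth a e \<in> V" using othV[OF e(1)] .
      have "(oth a e, v) \<in> ?R" using comp_eq_iff[OF bV vV(1), of ?T''] e(2) by simp
      then have "(oth a e, v) \<in> (adj_rel (T - {e}))\<^sup>*" using me[OF e(1)] by blast
      then have "v \<in> comp V (T - {e}) (oth a e)" using vV(1) by (simp add: comp_mem)
      then show ?thesis using e(1) unfolding S_def by blast
    qed
  qed
qed

lemma vertex_id:
  assumes sg: "simple_graph V E" and T: "spanning_tree V E T" and aV: "a \<in> V"
    and p0: "(\<Sum>v\<in>V. p v) = (0::real)"
  shows "(\<Sum>e\<in>{e\<in>T. a \<in> e}. sum p (comp V (T - {e}) a)) = p a"
proof -
  define S where "S = {e\<in>T. a \<in> e}"
  define C where "C e = comp V (T - {e}) (oth a e)" for e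
  have fin: "finite V" using sg_fin[OF sg] .
  have TE: "T \<subseteq> E" using T unfolding spanning_tree_def by simp
  have finT: "finite T" using finite_sub[OF sg TE] .
  have finS: "finite S" using finT unfolding S_def by simp
  have eS1: "\<And>e. e \<in> S \<Longrightarrow> e \<in> T" unfolding S_def by simp
  have eS2: "\<And>e. e \<in> S \<Longrightarrow> a \<in> e" unfolding S_def by simp
  have CV: "\<And>e. C e \<subseteq> V" unfolding C_def by (rule comp_sub)
  have step1: "sum p (comp V (T - {e}) a) = - sum p (C e)" if e: "e \<in> S" for e
  proof -
    have F2: "spanning_2forest V E (T - {e})" using tree_minus'(1)[OF sg T eS1[OF e] eS2[OF e]] .
    then have p2: "card (parts V (T - {e})) = 2" unfolding spanning_2forest_def by simp
    have nab: "(a, oth a e) \<notin> (adj_rel (T - {e}))\<^sup>*" using tree_minus'(2)[OF sg T eS1[OF e] eS2[OF e]] .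
    have bV: "oth a e \<in> V" using edge_oth(3)[OF sg T eS1[OF e] eS2[OF e]] .
    have "comp V (T - {e}) a = V - C e" using two_parts(2)[OF fin p2 aV bV nab] C_def by simp
    then have "sum p (comp V (T - {e}) a) = sum p V - sum p (C e)" using sum_diff[OF fin CV] by simp
    then show ?thesis using p0 by simp
  qed
  have disj: "\<forall>e\<in>S. \<forall>f\<in>S. e \<noteq> f \<longrightarrow> C e \<inter> C f = {}"
  proof (intro ballI impI)
    fix e f assume e: "e \<in> S" and f: "f \<in> S" and ef: "e \<noteq> f"
    show "C e \<inter> C f = {}" unfolding C_def
      using disj_part[OF sg T eS1[OF e] eS2[OF e] eS1[OF f] eS2[OF f] ef] .
  qed
  have finC: "\<forall>e\<in>S. finite (C e)"
  proof
    fix e show "finite (C e)" using finite_subset[OF CV fin] .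
  qed
  have "sum p (\<Union>(C ` S)) = (\<Sum>e\<in>S. sum p (C e))" using sum.UNION_disjoint[OF finS finC disj] .
  moreover have "\<Union>(C ` S) = V - {a}" using union_part[OF sg T aV] unfolding S_def C_def by simp
  moreover have "sum p (V - {a}) = - p a" using sum_diff[OF fin, of "{a}" p] aV p0 by simp
  ultimately have sC: "(\<Sum>e\<in>S. sum p (C e)) = - p a" by simp
  have "(\<Sum>e\<in>S. sum p (comp V (T - {e}) a)) = (\<Sum>e\<in>S. - sum p (C e))"
    using step1 by (rule sum.cong[OF refl])
  also have "\<dots> = - (\<Sum>e\<in>S. sum p (C e))" by (simp add: sum_negf)
  finally show ?thesis using sC unfolding S_def by simp
qed

lemma tree_id:
  assumes sg: "simple_graph V E" and T: "spanning_tree V E T" and X: "X \<subseteq> V"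
    and p0: "(\<Sum>v\<in>V. p v) = (0::real)"
  shows "(\<Sum>e\<in>T. \<Sum>a\<in>e \<inter> X. sum p (comp V (T - {e}) a)) = sum p X"
proof -
  have fin: "finite V" using sg_fin[OF sg] .
  have TE: "T \<subseteq> E" using T unfolding spanning_tree_def by simp
  have finT: "finite T" using finite_sub[OF sg TE] .
  have finX: "finite X" using finite_subset[OF X fin] .
  have eq: "\<And>e. e \<inter> X = {a. a \<in> X \<and> a \<in> e}" by blast
  have "(\<Sum>e\<in>T. \<Sum>a\<in>e \<inter> X. sum p (comp V (T - {e}) a))
      = (\<Sum>e\<in>T. \<Sum>a\<in>{a. a \<in> X \<and> a \<in> e}. sum p (comp V (T - {e}) a))"
    by (simp only: eq)
  also have "\<dots> = (\<Sum>a\<in>X. \<Sum>e\<in>{e. e \<in> T \<and> a \<in> e}. sum p (comp V (T - {e}) a))"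
    by (rule sum.swap_restrict[OF finT finX])
  also have "\<dots> = (\<Sum>a\<in>X. p a)"
  proof (rule sum.cong[OF refl])
    fix a assume "a \<in> X"
    then have aV: "a \<in> V" using X by blast
    show "(\<Sum>e\<in>{e. e \<in> T \<and> a \<in> e}. sum p (comp V (T - {e}) a)) = p a"
      using vertex_id[OF sg T aV p0] by simp
  qed
  finally show ?thesis .
qed

lemma someI_edge:
  assumes sg: "simple_graph V E" and T: "spanning_tree V E T" and e: "e \<in> T"
  shows "(SOME a. a \<in> e) \<in> e"
proof -
  have "card e = 2" using edge_card[OF sg T e] .
  then have "e \<noteq> {}" by auto
  then show ?thesis by (simp add: some_in_eq)
qed

lemma parts_sub: "X \<in> parts V F \<Longrightarrow> X \<subseteq> V"
proof -
  assume "X \<in> parts V F"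
  then obtain v where "X = comp V F v" unfolding parts_def by (rule imageE)
  then show ?thesis using comp_sub[of V F v] by simp
qed

lemma local_sum:
  assumes sg: "simple_graph V E" and F0: "spanning_2forest V E F0" and T: "spanning_tree V E T"
    and p0: "(\<Sum>v\<in>V. p v) = (0::real)"
  shows "(\<Sum>e\<in>{e\<in>T. cross F0 e}. sum p (comp V F0 (SOME a. a \<in> e))
            * sum p (comp V (T - {e}) (SOME a. a \<in> e))) = qF V p F0"
proof -
  have fin: "finite V" using sg_fin[OF sg] .
  have TE: "T \<subseteq> E" using T unfolding spanning_tree_def by simp
  have finT: "finite T" using finite_sub[OF sg TE] .
  have p2: "card (parts V F0) = 2" using F0 unfolding spanning_2forest_def by simp
  define X0 where "X0 = (SOME X. X \<in> parts V F0)"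
  have "parts V F0 \<noteq> {}" using p2 by auto
  then have X0P: "X0 \<in> parts V F0" unfolding X0_def by (simp add: some_in_eq)
  have X0V: "X0 \<subseteq> V" using parts_sub[OF X0P] .
  define g where "g e = (\<Sum>a\<in>e \<inter> X0. sum p (comp V (T - {e}) a))" for e
  have stp: "e = {a, oth a e} \<and> a \<noteq> oth a e \<and> oth a e \<in> V \<and> a \<in> V
      \<and> comp V (T - {e}) a = V - comp V (T - {e}) (oth a e)"
    if e: "e \<in> T" and a: "a = (SOME a. a \<in> e)" for e a
  proof -
    have ae: "a \<in> e" using someI_edge[OF sg T e] a by simp
    have eo: "e = {a, oth a e}" "a \<noteq> oth a e" "oth a e \<in> V" "a \<in> V" using edge_oth[OF sg T e ae] by auto
    have "spanning_2forest V E (T - {e})" using tree_minus'(1)[OF sg T e ae] .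
    then have p2': "card (parts V (T - {e})) = 2" unfolding spanning_2forest_def by simp
    have "comp V (T - {e}) a = V - comp V (T - {e}) (oth a e)"
      using two_parts(2)[OF fin p2' eo(4) eo(3) tree_minus'(2)[OF sg T e ae]] .
    then show ?thesis using eo by simp
  qed
  have claim1: "sum p (comp V F0 (SOME a. a \<in> e)) * sum p (comp V (T - {e}) (SOME a. a \<in> e))
      = sum p X0 * g e" if e: "e \<in> T" and ce: "cross F0 e" for e
  proof -
    define a where "a = (SOME a. a \<in> e)"
    define b where "b = oth a e"
    have st: "e = {a,b}" "a \<noteq> b" "b \<in> V" "a \<in> V" "comp V (T - {e}) a = V - comp V (T - {e}) b"
      using stp[OF e a_def] b_def by auto
    have nab: "(a,b) \<notin> (adj_rel F0)\<^sup>*" using ce st(1) cross_iff[of F0 a b] by simp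
    have P: "parts V F0 = {comp V F0 a, comp V F0 b}" "comp V F0 a = V - comp V F0 b"
      using two_parts[OF fin p2 st(4) st(3) nab] by auto
    have bb: "b \<in> comp V F0 b" using comp_self[OF st(3)] .
    have aa: "a \<in> comp V F0 a" using comp_self[OF st(4)] .
    have sub1: "comp V F0 b \<subseteq> V" "comp V (T - {e}) b \<subseteq> V" by (rule comp_sub)+
    have "X0 = comp V F0 a \<or> X0 = comp V F0 b" using X0P P(1) by simp
    then show ?thesis
    proof
      assume X: "X0 = comp V F0 a"
      have "e \<inter> X0 = {a}" using X st(1) P(2) aa bb by auto
      then have "g e = sum p (comp V (T - {e}) a)" unfolding g_def by simp
      then show ?thesis using X a_def by simp
    next
      assume X: "X0 = comp V F0 b"
      have "a \<notin> comp V F0 b" using aa P(2) by simp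
      then have "e \<inter> X0 = {b}" using X st(1) bb by auto
      then have ge: "g e = sum p (comp V (T - {e}) b)" unfolding g_def by simp
      have s1: "sum p (comp V F0 a) = - sum p X0"
        using P(2) X sum_diff[OF fin sub1(1), of p] p0 by simp
      have s2: "sum p (comp V (T - {e}) a) = - g e"
        using st(5) ge sum_diff[OF fin sub1(2), of p] p0 by simp
      show ?thesis using s1 s2 a_def by simp
    qed
  qed
  have claim2: "g e = 0" if e: "e \<in> T" and ce: "\<not> cross F0 e" for e
  proof -
    define a where "a = (SOME a. a \<in> e)"
    define b where "b = oth a e"
    have st: "e = {a,b}" "a \<noteq> b" "b \<in> V" "a \<in> V" "comp V (T - {e}) a = V - comp V (T - {e}) b"
      using stp[OF e a_def] b_def by auto
    have ab: "(a,b) \<in> (adj_rel F0)\<^sup>*" using ce st(1) cross_iff[of F0 a b] by simp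
    have ba: "(b,a) \<in> (adj_rel F0)\<^sup>*" using rtr_sym[OF ab] .
    obtain x where x: "X0 = comp V F0 x" "x \<in> V" using X0P unfolding parts_def by (rule imageE)
    have iff: "a \<in> X0 \<longleftrightarrow> b \<in> X0"
    proof
      assume "a \<in> X0"
      then have "(x,a) \<in> (adj_rel F0)\<^sup>*" using x by (simp add: comp_mem)
      then have "(x,b) \<in> (adj_rel F0)\<^sup>*" using ab by (rule rtrancl_trans)
      then show "b \<in> X0" using x st(3) by (simp add: comp_mem)
    next
      assume "b \<in> X0"
      then have "(x,b) \<in> (adj_rel F0)\<^sup>*" using x by (simp add: comp_mem)
      then have "(x,a) \<in> (adj_rel F0)\<^sup>*" using ba by (rule rtrancl_trans)
      then show "a \<in> X0" using x st(4) by (simp add: comp_mem)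
    qed
    show ?thesis
    proof (cases "a \<in> X0")
      case False
      then have "e \<inter> X0 = {}" using iff st(1) by auto
      then show ?thesis unfolding g_def by simp
    next
      case True
      then have "e \<inter> X0 = {a,b}" using iff st(1) by auto
      then have "g e = sum p (comp V (T - {e}) a) + sum p (comp V (T - {e}) b)"
        unfolding g_def using st(2) by simp
      also have "\<dots> = 0" using st(5) sum_diff[OF fin comp_sub[of V "T - {e}" b], of p] p0 by simp
      finally show ?thesis .
    qed
  qed
  have "(\<Sum>e\<in>{e\<in>T. cross F0 e}. sum p (comp V F0 (SOME a. a \<in> e))
            * sum p (comp V (T - {e}) (SOME a. a \<in> e))) = (\<Sum>e\<in>{e\<in>T. cross F0 e}. sum p X0 * g e)"
    using claim1 by (intro sum.cong) auto
  also have "\<dots> = sum p X0 * (\<Sum>e\<in>{e\<in>T. cross F0 e}. g e)" by (simp add: sum_distrib_left)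
  also have "(\<Sum>e\<in>{e\<in>T. cross F0 e}. g e) = (\<Sum>e\<in>T. g e)"
    using claim2 finT by (intro sum.mono_neutral_left) auto
  also have "(\<Sum>e\<in>T. g e) = sum p X0" unfolding g_def using tree_id[OF sg T X0V p0] .
  finally show ?thesis unfolding qF_def X0_def by (simp add: power2_eq_square)
qed

lemma tree_not_forest: "spanning_tree V E T \<Longrightarrow> \<not> spanning_2forest V E T"
  unfolding spanning_tree_def spanning_2forest_def by simp

lemma cross_notin: "cross F e \<Longrightarrow> e \<notin> F"
proof
  assume "cross F e" "e \<in> F"
  then obtain a b where ab: "e = {a,b}" "(a,b) \<notin> (adj_rel F)\<^sup>*" unfolding cross_def by blast
  then have "(a,b) \<in> adj_rel F" using \<open>e \<in> F\<close> by simp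
  then show False using ab(2) by (simp add: r_into_rtrancl)
qed

lemma comp_parts_eq:
  assumes eqp: "parts V F1 = parts V F2" and x: "x \<in> V"
  shows "comp V F2 x = comp V F1 x"
proof -
  have "comp V F2 x \<in> parts V F1" using comp_in_parts[OF x, of F2] eqp by simp
  moreover have "x \<in> comp V F2 x" using comp_self[OF x] .
  ultimately show ?thesis using parts_mem[of "comp V F2 x" V F1 x] by simp
qed

lemma edgeE:
  assumes sg: "simple_graph V E" and e: "e \<in> E"
  obtains a b where "e = {a,b}" "a \<noteq> b" "a \<in> V" "b \<in> V"
proof -
  have "card e = 2" using sg e unfolding simple_graph_def by blast
  then obtain a b where ab: "e = {a,b}" "a \<noteq> b" using card2_edge by blast
  have "wfE V E" using sg_wf[OF sg] by blast
  then have "a \<in> V" "b \<in> V" using wfE_edge[of V E a b] e ab by auto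
  then show ?thesis using that ab by blast
qed

lemma cross_parts_eq:
  assumes sg: "simple_graph V E" and eqp: "parts V F1 = parts V F2" and e: "e \<in> E"
    and c: "cross F1 e"
  shows "cross F2 e"
proof -
  obtain a b where ab: "e = {a,b}" "a \<noteq> b" "a \<in> V" "b \<in> V" using edgeE[OF sg e] by blast
  have "(a,b) \<notin> (adj_rel F1)\<^sup>*" using c ab(1) cross_iff[of F1 a b] by simp
  then have "comp V F1 a \<noteq> comp V F1 b" using comp_eq_iff[OF ab(3) ab(4), of F1] by simp
  then have "comp V F2 a \<noteq> comp V F2 b" using comp_parts_eq[OF eqp ab(3)] comp_parts_eq[OF eqp ab(4)] by simp
  then have "(a,b) \<notin> (adj_rel F2)\<^sup>*" using comp_eq_iff[OF ab(3) ab(4), of F2] by simp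
  then show ?thesis using ab(1) cross_iff[of F2 a b] by simp
qed

lemma cross_plus:
  assumes sg: "simple_graph V E" and F: "spanning_2forest V E F" and e: "e \<in> E" and c: "cross F e"
  shows "spanning_tree V E (insert e F)"
proof -
  obtain a b where ab: "e = {a,b}" "a \<noteq> b" "a \<in> V" "b \<in> V" using edgeE[OF sg e] by blast
  have "(a,b) \<notin> (adj_rel F)\<^sup>*" using c ab(1) cross_iff[of F a b] by simp
  then show ?thesis using forest_plus[OF sg F] e ab(1) by simp
qed

lemma plus_cross:
  assumes sg: "simple_graph V E" and F: "spanning_2forest V E F" and e: "e \<in> E"
    and T: "spanning_tree V E (insert e F)"
  shows "cross F e"
proof -
  obtain a b where ab: "e = {a,b}" "a \<noteq> b" "a \<in> V" "b \<in> V" using edgeE[OF sg e] by blast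
  have "(a,b) \<notin> (adj_rel F)\<^sup>*" using forest_plus_conv[OF F] T ab(1) by simp
  then show ?thesis using ab(1) cross_iff[of F a b] by simp
qed

lemma edge_in_E: "spanning_tree V E T \<Longrightarrow> e \<in> T \<Longrightarrow> e \<in> E"
  unfolding spanning_tree_def by blast

lemma nbrs_U:
  assumes sg: "simple_graph V E" and u: "(F1,F2,T) \<in> GV1 V E" and eqp: "parts V F1 = parts V F2"
  shows "{w \<in> GV2 V E. gadj12 E (F1,F2,T) w}
      = (\<lambda>e. (insert e F1, insert e F2, T - {e})) ` {e\<in>T. cross F1 e}"
proof -
  have F1f: "spanning_2forest V E F1" and F2f: "spanning_2forest V E F2" and Tt: "spanning_tree V E T"
    using u unfolding GV1_def by auto
  show ?thesis
  proof (rule set_eqI, rule iffI)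
    fix w assume w: "w \<in> {w \<in> GV2 V E. gadj12 E (F1,F2,T) w}"
    obtain T1 T2 F where wt: "w = (T1,T2,F)" by (cases w) blast
    have T1t: "spanning_tree V E T1" and T2t: "spanning_tree V E T2" and Ff: "spanning_2forest V E F"
      using w wt unfolding GV2_def by auto
    have "gadj12 E (F1,F2,T) (T1,T2,F)" using w wt by simp
    then obtain e where e: "e \<in> E" "T = insert e F" "F1 = T1 - {e}" "F2 = T2 - {e}"
      unfolding gadj12_def by (auto simp only: prod.case)
    have eT1: "e \<in> T1"
    proof (rule ccontr)
      assume "e \<notin> T1"
      then have "F1 = T1" using e(3) by simp
      then show False using F1f tree_not_forest[OF T1t] by simp
    qed
    have eT2: "e \<in> T2"
    proof (rule ccontr)
      assume "e \<notin> T2"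
      then have "F2 = T2" using e(4) by simp
      then show False using F2f tree_not_forest[OF T2t] by simp
    qed
    have T1eq: "T1 = insert e F1" using eT1 e(3) by blast
    have eF: "e \<notin> F"
    proof
      assume "e \<in> F"
      then have "T = F" using e(2) by blast
      then show False using Ff tree_not_forest[OF Tt] by simp
    qed
    have Feq: "F = T - {e}" using eF e(2) by blast
    have eT: "e \<in> T" using e(2) by simp
    have "cross F1 e" using plus_cross[OF sg F1f e(1)] T1t T1eq by simp
    moreover have "T2 = insert e F2" using eT2 e(4) by blast
    ultimately have "w = (\<lambda>e. (insert e F1, insert e F2, T - {e})) e" "e \<in> {e\<in>T. cross F1 e}"
      using wt T1eq Feq eT by auto
    then show "w \<in> (\<lambda>e. (insert e F1, insert e F2, T - {e})) ` {e\<in>T. cross F1 e}"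
      by (rule image_eqI)
  next
    fix w assume "w \<in> (\<lambda>e. (insert e F1, insert e F2, T - {e})) ` {e\<in>T. cross F1 e}"
    then obtain e where e0: "e \<in> {e\<in>T. cross F1 e}" and wt: "w = (insert e F1, insert e F2, T - {e})" by (rule imageE)
    have e: "e \<in> T" "cross F1 e" using e0 by auto
    have eE: "e \<in> E" using edge_in_E[OF Tt e(1)] .
    have c2: "cross F2 e" using cross_parts_eq[OF sg eqp eE e(2)] .
    have t1: "spanning_tree V E (insert e F1)" using cross_plus[OF sg F1f eE e(2)] .
    have t2: "spanning_tree V E (insert e F2)" using cross_plus[OF sg F2f eE c2] .
    obtain a where a: "a \<in> e" using someI_edge[OF sg Tt e(1)] by blast
    have f: "spanning_2forest V E (T - {e})" using tree_minus'(1)[OF sg Tt e(1) a] .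
    have "w \<in> GV2 V E" using wt t1 t2 f unfolding GV2_def by simp
    moreover have "gadj12 E (F1,F2,T) w"
    proof -
      have "T = insert e (T - {e})" using e(1) by blast
      moreover have "F1 = insert e F1 - {e}" using cross_notin[OF e(2)] by simp
      moreover have "F2 = insert e F2 - {e}" using cross_notin[OF c2] by simp
      ultimately have "T = insert e (T - {e}) \<and> F1 = insert e F1 - {e} \<and> F2 = insert e F2 - {e}" by simp
      then have ex: "\<exists>e'\<in>E. T = insert e' (T - {e}) \<and> F1 = insert e F1 - {e'} \<and> F2 = insert e F2 - {e'}"
        using eE by blast
      show ?thesis unfolding gadj12_def wt prod.case by (rule ex)
    qed
    ultimately show "w \<in> {w \<in> GV2 V E. gadj12 E (F1,F2,T) w}" by simp
  qed
qed

lemma inj_U: "inj_on (\<lambda>e. (insert e F1, insert e F2, T - {e})) {e\<in>T. cross F1 e}"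
proof (rule inj_onI)
  fix e f assume e: "e \<in> {e\<in>T. cross F1 e}" and f: "f \<in> {e\<in>T. cross F1 e}"
    and eq: "(insert e F1, insert e F2, T - {e}) = (insert f F1, insert f F2, T - {f})"
  then have h: "T - {e} = T - {f}" by simp
  have eT: "e \<in> T" using e by auto
  show "e = f"
  proof (rule ccontr)
    assume "e \<noteq> f"
    then have "e \<in> T - {f}" using eT by simp
    then have "e \<in> T - {e}" using h by simp
    then show False by simp
  qed
qed

lemma nbrs_W:
  assumes sg: "simple_graph V E" and w: "(T1,T2,F) \<in> GV2 V E"
    and ns: "\<not> (\<exists>e \<in> (T1 - T2) \<union> (T2 - T1). spanning_tree V E (insert e F))"
  shows "{u \<in> GV1 V E. gadj12 E u (T1,T2,F)}
      = (\<lambda>e. (T1 - {e}, T2 - {e}, insert e F)) ` {e\<in>T1. cross F e}"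
proof -
  have T1t: "spanning_tree V E T1" and T2t: "spanning_tree V E T2" and Ff: "spanning_2forest V E F"
    using w unfolding GV2_def by auto
  show ?thesis
  proof (rule set_eqI, rule iffI)
    fix u assume u: "u \<in> {u \<in> GV1 V E. gadj12 E u (T1,T2,F)}"
    obtain F1 F2 T where ut: "u = (F1,F2,T)" by (cases u) blast
    have F1f: "spanning_2forest V E F1" and Tt: "spanning_tree V E T"
      using u ut unfolding GV1_def by auto
    have "gadj12 E (F1,F2,T) (T1,T2,F)" using u ut by simp
    then obtain e where e: "e \<in> E" "T = insert e F" "F1 = T1 - {e}" "F2 = T2 - {e}"
      unfolding gadj12_def by (auto simp only: prod.case)
    have eT1: "e \<in> T1"
    proof (rule ccontr)
      assume "e \<notin> T1"
      then have "F1 = T1" using e(3) by simp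
      then show False using F1f tree_not_forest[OF T1t] by simp
    qed
    have "cross F e" using plus_cross[OF sg Ff e(1)] Tt e(2) by simp
    then have "u = (\<lambda>e. (T1 - {e}, T2 - {e}, insert e F)) e" "e \<in> {e\<in>T1. cross F e}"
      using ut e eT1 by auto
    then show "u \<in> (\<lambda>e. (T1 - {e}, T2 - {e}, insert e F)) ` {e\<in>T1. cross F e}"
      by (rule image_eqI)
  next
    fix u assume "u \<in> (\<lambda>e. (T1 - {e}, T2 - {e}, insert e F)) ` {e\<in>T1. cross F e}"
    then obtain e where e0: "e \<in> {e\<in>T1. cross F e}" and ut: "u = (T1 - {e}, T2 - {e}, insert e F)" by (rule imageE)
    have e: "e \<in> T1" "cross F e" using e0 by auto
    have eE: "e \<in> E" using edge_in_E[OF T1t e(1)] .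
    have t: "spanning_tree V E (insert e F)" using cross_plus[OF sg Ff eE e(2)] .
    have eT2: "e \<in> T2"
    proof (rule ccontr)
      assume "e \<notin> T2"
      then have "e \<in> (T1 - T2) \<union> (T2 - T1)" using e(1) by simp
      then show False using ns t by blast
    qed
    obtain a where a: "a \<in> e" using someI_edge[OF sg T1t e(1)] by blast
    have f1: "spanning_2forest V E (T1 - {e})" using tree_minus'(1)[OF sg T1t e(1) a] .
    have f2: "spanning_2forest V E (T2 - {e})" using tree_minus'(1)[OF sg T2t eT2 a] .
    have "u \<in> GV1 V E" using ut t f1 f2 unfolding GV1_def by simp
    moreover have "gadj12 E u (T1,T2,F)"
    proof -
      have "\<exists>e'\<in>E. insert e F = insert e' F \<and> T1 - {e} = T1 - {e'} \<and> T2 - {e} = T2 - {e'}"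
        using eE by blast
      then show ?thesis unfolding gadj12_def ut prod.case .
    qed
    ultimately show "u \<in> {u \<in> GV1 V E. gadj12 E u (T1,T2,F)}" by simp
  qed
qed

lemma inj_W: "inj_on (\<lambda>e. (T1 - {e}, T2 - {e}, insert e F)) {e\<in>T1. cross F e}"
proof (rule inj_onI)
  fix e f assume e: "e \<in> {e\<in>T1. cross F e}" and f: "f \<in> {e\<in>T1. cross F e}"
    and eq: "(T1 - {e}, T2 - {e}, insert e F) = (T1 - {f}, T2 - {f}, insert f F)"
  then have h: "T1 - {e} = T1 - {f}" by simp
  have eT: "e \<in> T1" using e by auto
  show "e = f"
  proof (rule ccontr)
    assume "e \<noteq> f"
    then have "e \<in> T1 - {f}" using eT by simp
    then have "e \<in> T1 - {e}" using h by simp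
    then show False by simp
  qed
qed

definition cval :: "'v set \<Rightarrow> ('v \<Rightarrow> real) \<Rightarrow> ('v set set \<times> 'v set set \<times> 'v set set)
    \<Rightarrow> ('v set set \<times> 'v set set \<times> 'v set set) \<Rightarrow> real" where
  "cval V p u w = (let e = (SOME e. e \<in> snd (snd u) - snd (snd w)); a = (SOME a. a \<in> e)
     in sum p (comp V (fst u) a) * sum p (comp V (snd (snd w)) a))"

lemma finite_GV1: "simple_graph V E \<Longrightarrow> finite (GV1 V E)"
proof -
  assume sg: "simple_graph V E"
  have "GV1 V E \<subseteq> Pow E \<times> Pow E \<times> Pow E"
    unfolding GV1_def spanning_tree_def spanning_2forest_def by auto
  moreover have "finite (Pow E \<times> Pow E \<times> Pow E)" using sg_finE[OF sg] by simp
  ultimately show ?thesis by (rule finite_subset)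
qed

lemma finite_GV2: "simple_graph V E \<Longrightarrow> finite (GV2 V E)"
proof -
  assume sg: "simple_graph V E"
  have "GV2 V E \<subseteq> Pow E \<times> Pow E \<times> Pow E"
    unfolding GV2_def spanning_tree_def spanning_2forest_def by auto
  moreover have "finite (Pow E \<times> Pow E \<times> Pow E)" using sg_finE[OF sg] by simp
  ultimately show ?thesis by (rule finite_subset)
qed

lemma sumU:
  assumes sg: "simple_graph V E" and u: "(F1,F2,T) \<in> GV1 V E" and ns: "\<not> special V E (Inl (F1,F2,T))"
    and p0: "(\<Sum>v\<in>V. p v) = (0::real)"
  shows "(\<Sum>w\<in>{w \<in> GV2 V E. gadj12 E (F1,F2,T) w}. cval V p (F1,F2,T) w) = qG V p (Inl (F1,F2,T))"
proof -
  have eqp: "parts V F1 = parts V F2" using ns unfolding special_def by simp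
  have F1f: "spanning_2forest V E F1" and Tt: "spanning_tree V E T" using u unfolding GV1_def by auto
  let ?f = "\<lambda>e. (insert e F1, insert e F2, T - {e})"
  have "(\<Sum>w\<in>{w \<in> GV2 V E. gadj12 E (F1,F2,T) w}. cval V p (F1,F2,T) w)
      = (\<Sum>w\<in>?f ` {e\<in>T. cross F1 e}. cval V p (F1,F2,T) w)" using nbrs_U[OF sg u eqp] by simp
  also have "\<dots> = (\<Sum>e\<in>{e\<in>T. cross F1 e}. cval V p (F1,F2,T) (?f e))"
    using sum.reindex[OF inj_U, of "cval V p (F1,F2,T)" F1 F2 T] by (simp add: o_def)
  also have "\<dots> = (\<Sum>e\<in>{e\<in>T. cross F1 e}. sum p (comp V F1 (SOME a. a \<in> e))
            * sum p (comp V (T - {e}) (SOME a. a \<in> e)))"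
  proof (rule sum.cong[OF refl])
    fix e assume "e \<in> {e\<in>T. cross F1 e}"
    then have "e \<in> T" by simp
    then have "T - (T - {e}) = {e}" by blast
    then show "cval V p (F1,F2,T) (?f e) = sum p (comp V F1 (SOME a. a \<in> e))
            * sum p (comp V (T - {e}) (SOME a. a \<in> e))" unfolding cval_def by (simp add: Let_def)
  qed
  also have "\<dots> = qF V p F1" using local_sum[OF sg F1f Tt p0] .
  finally show ?thesis unfolding qG_def by simp
qed

lemma sumW:
  assumes sg: "simple_graph V E" and w: "(T1,T2,F) \<in> GV2 V E" and ns: "\<not> special V E (Inr (T1,T2,F))"
    and p0: "(\<Sum>v\<in>V. p v) = (0::real)"
  shows "(\<Sum>u\<in>{u \<in> GV1 V E. gadj12 E u (T1,T2,F)}. cval V p u (T1,T2,F)) = qG V p (Inr (T1,T2,F))"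
proof -
  have ns': "\<not> (\<exists>e \<in> (T1 - T2) \<union> (T2 - T1). spanning_tree V E (insert e F))"
    using ns unfolding special_def by simp
  have Ff: "spanning_2forest V E F" and Tt: "spanning_tree V E T1" using w unfolding GV2_def by auto
  let ?f = "\<lambda>e. (T1 - {e}, T2 - {e}, insert e F)"
  have "(\<Sum>u\<in>{u \<in> GV1 V E. gadj12 E u (T1,T2,F)}. cval V p u (T1,T2,F))
      = (\<Sum>u\<in>?f ` {e\<in>T1. cross F e}. cval V p u (T1,T2,F))" using nbrs_W[OF sg w ns'] by simp
  also have "\<dots> = (\<Sum>e\<in>{e\<in>T1. cross F e}. cval V p (?f e) (T1,T2,F))"
    using sum.reindex[OF inj_W, of "\<lambda>u. cval V p u (T1,T2,F)" T1 T2 F] by (simp add: o_def)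
  also have "\<dots> = (\<Sum>e\<in>{e\<in>T1. cross F e}. sum p (comp V F (SOME a. a \<in> e))
            * sum p (comp V (T1 - {e}) (SOME a. a \<in> e)))"
  proof (rule sum.cong[OF refl])
    fix e assume "e \<in> {e\<in>T1. cross F e}"
    then have "cross F e" by simp
    then have "e \<notin> F" by (rule cross_notin)
    then have "insert e F - F = {e}" by blast
    then show "cval V p (?f e) (T1,T2,F) = sum p (comp V F (SOME a. a \<in> e))
            * sum p (comp V (T1 - {e}) (SOME a. a \<in> e))" unfolding cval_def by (simp add: Let_def mult.commute)
  qed
  also have "\<dots> = qF V p F" using local_sum[OF sg Ff Tt p0] .
  finally show ?thesis unfolding qG_def by simp
qed

theorem proposition3p11:
  fixes V :: "'v set" and E :: "'v set set" and p :: "'v \<Rightarrow> real" and x :: "'v gvert"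
  assumes "simple_graph V E"
    and "connected_graph V E"
    and "(\<Sum>v\<in>V. p v) = 0"
    and "x \<in> GVerts V E"
    and "\<forall>y \<in> Gcomp V E x. \<not> special V E y"
  shows "(\<Sum>u\<in>{u. Inl u \<in> Gcomp V E x}. qG V p (Inl u))
       = (\<Sum>w\<in>{w. Inr w \<in> Gcomp V E x}. qG V p (Inr w))"
proof -
  note sg = assms(1) and p0 = assms(3) and ns = assms(5)
  define C1 where "C1 = {u. Inl u \<in> Gcomp V E x}"
  define C2 where "C2 = {w. Inr w \<in> Gcomp V E x}"
  have C1sub: "C1 \<subseteq> GV1 V E"
  proof
    fix u assume "u \<in> C1"
    then have "Inl u \<in> GVerts V E" unfolding C1_def Gcomp_def by simp
    then show "u \<in> GV1 V E" unfolding GVerts_def by auto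
  qed
  have C2sub: "C2 \<subseteq> GV2 V E"
  proof
    fix u assume "u \<in> C2"
    then have "Inr u \<in> GVerts V E" unfolding C2_def Gcomp_def by simp
    then show "u \<in> GV2 V E" unfolding GVerts_def by auto
  qed
  have fin1: "finite C1" using finite_subset[OF C1sub finite_GV1[OF sg]] .
  have fin2: "finite C2" using finite_subset[OF C2sub finite_GV2[OF sg]] .
  have cl1: "w \<in> C2" if u: "u \<in> C1" and w: "w \<in> GV2 V E" and g: "gadj12 E u w" for u w
  proof -
    have "(x, Inl u) \<in> (GEdges V E)\<^sup>*" using u unfolding C1_def Gcomp_def by simp
    moreover have "(Inl u, Inr w) \<in> GEdges V E" using C1sub u w g unfolding GEdges_def by blast
    ultimately have "(x, Inr w) \<in> (GEdges V E)\<^sup>*" by (rule rtrancl_into_rtrancl)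
    moreover have "Inr w \<in> GVerts V E" using w unfolding GVerts_def by simp
    ultimately show ?thesis unfolding C2_def Gcomp_def by simp
  qed
  have cl2: "u \<in> C1" if w: "w \<in> C2" and u: "u \<in> GV1 V E" and g: "gadj12 E u w" for u w
  proof -
    have "(x, Inr w) \<in> (GEdges V E)\<^sup>*" using w unfolding C2_def Gcomp_def by simp
    moreover have "(Inr w, Inl u) \<in> GEdges V E" using C2sub u w g unfolding GEdges_def by blast
    ultimately have "(x, Inl u) \<in> (GEdges V E)\<^sup>*" by (rule rtrancl_into_rtrancl)
    moreover have "Inl u \<in> GVerts V E" using u unfolding GVerts_def by simp
    ultimately show ?thesis unfolding C1_def Gcomp_def by simp
  qed
  have qU: "qG V p (Inl u) = (\<Sum>w\<in>{w. w \<in> C2 \<and> gadj12 E u w}. cval V p u w)" if u: "u \<in> C1" for u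
  proof -
    obtain F1 F2 T where ut: "u = (F1,F2,T)" by (cases u) blast
    have uG: "(F1,F2,T) \<in> GV1 V E" using C1sub u ut by blast
    have "Inl u \<in> Gcomp V E x" using u unfolding C1_def by simp
    then have nsu: "\<not> special V E (Inl (F1,F2,T))" using ns ut by blast
    have "{w. w \<in> C2 \<and> gadj12 E u w} = {w \<in> GV2 V E. gadj12 E u w}"
      using cl1[OF u] C2sub by blast
    then show ?thesis using sumU[OF sg uG nsu p0] ut by simp
  qed
  have qW: "qG V p (Inr w) = (\<Sum>u\<in>{u. u \<in> C1 \<and> gadj12 E u w}. cval V p u w)" if w: "w \<in> C2" for w
  proof -
    obtain T1 T2 F where wt: "w = (T1,T2,F)" by (cases w) blast
    have wG: "(T1,T2,F) \<in> GV2 V E" using C2sub w wt by blast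
    have "Inr w \<in> Gcomp V E x" using w unfolding C2_def by simp
    then have nsw: "\<not> special V E (Inr (T1,T2,F))" using ns wt by blast
    have "{u. u \<in> C1 \<and> gadj12 E u w} = {u \<in> GV1 V E. gadj12 E u w}"
      using cl2[OF w] C1sub by blast
    then show ?thesis using sumW[OF sg wG nsw p0] wt by simp
  qed
  have "(\<Sum>u\<in>C1. qG V p (Inl u)) = (\<Sum>u\<in>C1. \<Sum>w\<in>{w. w \<in> C2 \<and> gadj12 E u w}. cval V p u w)"
    using qU by (rule sum.cong[OF refl])
  also have "\<dots> = (\<Sum>w\<in>C2. \<Sum>u\<in>{u. u \<in> C1 \<and> gadj12 E u w}. cval V p u w)"
    by (rule sum.swap_restrict[OF fin1 fin2])
  also have "\<dots> = (\<Sum>w\<in>C2. qG V p (Inr w))"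
    using qW by (intro sum.cong[OF refl]) simp
  finally show ?thesis unfolding C1_def C2_def .
qed

end
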